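(* Let $t\ge 3$ and let $T\in\{1,-1\}^t$. Then $\mathfrak{q}(\mathrm{ro}(T))=\mathfrak{q}(T)$. Moreover, with $T^-:=\{e\in\{1,\ldots,t\}: T(e)=-1\}$: (i) if $|T^-\cap\{1,t\}|=1$, then $\boldsymbol{x}(\mathrm{ro}(T))=\boldsymbol{x}(T)\,\overline{\mathbf{U}}(t)\,\overline{\mathbf{T}}(t)$; (ii) if $|T^-\cap\{1,t\}|=2$, then $\boldsymbol{x}(\mathrm{ro}(T))=\boldsymbol{\sigma}(1)+\boldsymbol{x}(T)\,\overline{\mathbf{U}}(t)\,\overline{\mathbf{T}}(t)$; (iii) if $|T^-\cap\{1,t\}|=0$, then $\boldsymbol{x}(\mathrm{ro}(T))=-\boldsymbol{\sigma}(1)+\boldsymbol{x}(T)\,\overline{\mathbf{U}}(t)\,\overline{\mathbf{T}}(t)$.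
   Context: Vectors are row vectors in $\mathbb{R}^t$; $\boldsymbol{\sigma}(e)$ is the $e$-th standard unit vector, $\mathrm{T}^{(+)}=(1,\ldots,1)$. For $S\subseteq\{1,\ldots,t\}$, ${}_{-S}\mathrm{T}^{(+)}$ denotes the vector with entries $-1$ on $S$ and $1$ elsewhere. Define $R^0:=\mathrm{T}^{(+)}$ and $R^s:={}_{-\{1,\ldots,s\}}\mathrm{T}^{(+)}$ for $1\le s\le t-1$. These form a basis of $\mathbb{R}^t$; for $T\in\{1,-1\}^t$, $\boldsymbol{x}(T)$ denotes the unique vector (it lies in $\{-1,0,1\}^t$) with $T=\sum_{i=1}^t x_iR^{i-1}$, and $\mathfrak{q}(T)$ is the number of nonzero entries of $\boldsymbol{x}(T)$. $\overline{\mathbf{U}}(t)$ is the $t\times t$ backward identity matrix ($(i,j)$ entry $\delta_{i+j,t+1}$), $\overline{\mathbf{T}}(t)$ is the $t\times t$ forward shift matrix ($(i,j)$ entry $\delta_{j-i,1}$), and $\mathrm{ro}(T):=-T\,\overline{\mathbf{U}}(t)$. *)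

theory Defs
  imports Complex_Main
begin

text \<open>Vectors in R^t are represented as functions nat => real, indexed by 1..t,
  and equal to 0 outside {1..t}. Matrices are functions nat => nat => real,
  indexed by 1..t on both sides.\<close>

definition vecs :: "nat \<Rightarrow> (nat \<Rightarrow> real) set" where
  "vecs t = {v. \<forall>i. i \<notin> {1..t} \<longrightarrow> v i = 0}"

definition signvecs :: "nat \<Rightarrow> (nat \<Rightarrow> real) set" where
  "signvecs t = {T. T \<in> vecs t \<and> (\<forall>e\<in>{1..t}. T e = 1 \<or> T e = -1)}"

definition stdvec :: "nat \<Rightarrow> nat \<Rightarrow> real" where
  "stdvec e = (\<lambda>i. if i = e then 1 else 0)"

definition Rbasis :: "nat \<Rightarrow> nat \<Rightarrow> nat \<Rightarrow> real" where
  "Rbasis t s = (\<lambda>e. if e \<in> {1..t} then (if e \<le> s then -1 else 1) else 0)"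

definition xvec :: "nat \<Rightarrow> (nat \<Rightarrow> real) \<Rightarrow> nat \<Rightarrow> real" where
  "xvec t T = (THE x. x \<in> vecs t \<and>
      T = (\<lambda>e. \<Sum>i=1..t. x i * Rbasis t (i - 1) e))"

definition qnum :: "nat \<Rightarrow> (nat \<Rightarrow> real) \<Rightarrow> nat" where
  "qnum t T = card {i \<in> {1..t}. xvec t T i \<noteq> 0}"

definition Ubar :: "nat \<Rightarrow> nat \<Rightarrow> nat \<Rightarrow> real" where
  "Ubar t = (\<lambda>i j. if i + j = t + 1 then 1 else 0)"

definition Tbar :: "nat \<Rightarrow> nat \<Rightarrow> nat \<Rightarrow> real" where
  "Tbar t = (\<lambda>i j. if j = i + 1 then 1 else 0)"

definition vecmat :: "nat \<Rightarrow> (nat \<Rightarrow> real) \<Rightarrow> (nat \<Rightarrow> nat \<Rightarrow> real) \<Rightarrow> nat \<Rightarrow> real" where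
  "vecmat t v M = (\<lambda>j. if j \<in> {1..t} then (\<Sum>i=1..t. v i * M i j) else 0)"

definition ro :: "nat \<Rightarrow> (nat \<Rightarrow> real) \<Rightarrow> nat \<Rightarrow> real" where
  "ro t T = (\<lambda>j. - vecmat t T (Ubar t) j)"

definition negset :: "nat \<Rightarrow> (nat \<Rightarrow> real) \<Rightarrow> nat set" where
  "negset t T = {e \<in> {1..t}. T e = -1}"

end

theory Submission
  imports Defs
begin

definition Xf :: "nat \<Rightarrow> (nat \<Rightarrow> real) \<Rightarrow> nat \<Rightarrow> real" where
  "Xf t T = (\<lambda>j. if j = 1 then (T 1 + T t) / 2 else if j \<in> {2..t} then (T j - T (j-1)) / 2 else 0)"

lemma split_sum: "(e::nat) \<le> t \<Longrightarrow> (\<Sum>i=1..t. f i) = (\<Sum>i=1..e. f i) + (\<Sum>i=e+1..t. (f i::real))"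
  using sum.ub_add_nat[of 1 e f "t - e"] by simp

lemma rep:
  assumes "e \<in> {1..t}"
  shows "(\<Sum>i=1..t. x i * Rbasis t (i - 1) e) = 2 * (\<Sum>i=1..e. x i) - (\<Sum>i=1..t. x i)"
proof -
  have "(\<Sum>i=1..t. x i * Rbasis t (i - 1) e) = (\<Sum>i=1..e. x i * Rbasis t (i - 1) e) + (\<Sum>i=e+1..t. x i * Rbasis t (i - 1) e)"
    using assms by (intro split_sum) auto
  also have "(\<Sum>i=1..e. x i * Rbasis t (i - 1) e) = (\<Sum>i=1..e. x i)"
    using assms by (intro sum.cong) (auto simp: Rbasis_def)
  also have "(\<Sum>i=e+1..t. x i * Rbasis t (i - 1) e) = - (\<Sum>i=e+1..t. x i)"
    using assms by (auto simp: Rbasis_def sum_negf[symmetric] intro!: sum.cong)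
  finally show ?thesis using split_sum[of e t x] assms by simp
qed

lemma tele:
  assumes "1 \<le> e" "e \<le> t"
  shows "(\<Sum>i=1..e. Xf t T i) = (T t + T e) / 2"
  using assms
proof (induction e)
  case 0 then show ?case by simp
next
  case (Suc e)
  show ?case
  proof (cases "e = 0")
    case True then show ?thesis by (simp add: Xf_def)
  next
    case False
    then have "(\<Sum>i=1..Suc e. Xf t T i) = (T t + T e) / 2 + Xf t T (Suc e)"
      using Suc by (simp add: sum.cl_ivl_Suc)
    also have "\<dots> = (T t + T (Suc e)) / 2" using Suc False by (simp add: Xf_def field_simps)
    finally show ?thesis .
  qed
qed

lemma xvec_eq:
  assumes "T \<in> vecs t" "t \<ge> 1"
  shows "xvec t T = Xf t T"
  unfolding xvec_def
proof (rule the_equality)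
  show "Xf t T \<in> vecs t \<and> T = (\<lambda>e. \<Sum>i=1..t. Xf t T i * Rbasis t (i - 1) e)"
  proof
    show "Xf t T \<in> vecs t" using assms by (auto simp: vecs_def Xf_def)
    show "T = (\<lambda>e. \<Sum>i=1..t. Xf t T i * Rbasis t (i - 1) e)"
    proof
      fix e
      show "T e = (\<Sum>i=1..t. Xf t T i * Rbasis t (i - 1) e)"
      proof (cases "e \<in> {1..t}")
        case True
        then show ?thesis using rep[OF True, of "Xf t T"] tele[of e t T] tele[of t t T] by auto
      next
        case False
        then show ?thesis using assms(1) by (auto simp: vecs_def Rbasis_def)
      qed
    qed
  qed
next
  fix x assume h: "x \<in> vecs t \<and> T = (\<lambda>e. \<Sum>i=1..t. x i * Rbasis t (i - 1) e)"
  define P where "P e = (\<Sum>i=1..e. x i)" for e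
  have TP: "T e = 2 * P e - P t" if "e \<in> {1..t}" for e
    using h rep[OF that, of x] by (simp add: P_def)
  show "x = Xf t T"
  proof
    fix j
    show "x j = Xf t T j"
    proof (cases "j = 1")
      case True
      then show ?thesis using TP[of 1] TP[of t] assms by (simp add: Xf_def P_def)
    next
      case False
      show ?thesis
      proof (cases "j \<in> {2..t}")
        case True
        then have jj: "j = Suc (j-1)" "j - 1 \<ge> 1" by auto
        have pj: "P j = P (j-1) + x j" unfolding P_def
          by (subst jj(1), subst sum.cl_ivl_Suc) (use jj in auto)
        have "T (j-1) = 2 * P (j-1) - P t" using jj True by (intro TP) auto
        then show ?thesis using TP[of j] pj jj True False by (simp add: Xf_def)
      next
        case False
        then show ?thesis using `j \<noteq> 1` h by (auto simp: Xf_def vecs_def)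
      qed
    qed
  qed
qed

lemma vU: "j \<in> {1..t} \<Longrightarrow> vecmat t v (Ubar t) j = v (t+1-j)"
proof -
  assume j: "j \<in> {1..t}"
  have "vecmat t v (Ubar t) j = (\<Sum>i\<in>{1..t}. v i * Ubar t i j)"
    using j by (simp add: vecmat_def)
  also have "\<dots> = (\<Sum>i\<in>{1..t}. if i = t+1-j then v i else 0)"
    using j by (intro sum.cong) (auto simp: Ubar_def)
  also have "\<dots> = v (t+1-j)" using j by (subst sum.delta) auto
  finally show ?thesis .
qed

lemma vT: "vecmat t w (Tbar t) j = (if j \<in> {2..t} then w (j-1) else 0)"
proof (cases "j \<in> {2..t}")
  case True
  have "vecmat t w (Tbar t) j = (\<Sum>i\<in>{1..t}. w i * Tbar t i j)"
    using True by (simp add: vecmat_def)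
  also have "\<dots> = (\<Sum>i\<in>{1..t}. if i = j-1 then w i else 0)"
    using True by (intro sum.cong) (auto simp: Tbar_def)
  also have "\<dots> = w (j-1)" using True by (subst sum.delta) auto
  finally show ?thesis using True by simp
next
  case False
  then show ?thesis by (auto simp: vecmat_def Tbar_def intro!: sum.neutral)
qed

lemma key:
  assumes "T \<in> vecs t" "t \<ge> 2"
  shows "xvec t (ro t T) = (\<lambda>i. (- (T 1 + T t) / 2) * stdvec 1 i + vecmat t (vecmat t (xvec t T) (Ubar t)) (Tbar t) i)"
proof -
  have t1: "t \<ge> 1" using assms by simp
  have rv: "ro t T \<in> vecs t" by (auto simp: ro_def vecs_def vecmat_def)
  have r: "ro t T j = - T (t+1-j)" if "j \<in> {1..t}" for j
    using vU[OF that] by (simp add: ro_def)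
  show ?thesis
    unfolding xvec_eq[OF rv t1] xvec_eq[OF assms(1) t1]
  proof
    fix j
    consider "j = 1" | "j \<in> {2..t}" | "j \<notin> {1..t}" by fastforce
    then show "Xf t (ro t T) j = (- (T 1 + T t) / 2) * stdvec 1 j + vecmat t (vecmat t (Xf t T) (Ubar t)) (Tbar t) j"
    proof cases
      case 1 then show ?thesis using assms r[of 1] r[of t] by (simp add: Xf_def vT stdvec_def)
    next
      case 2
      have a: "t + 1 - (j - 1) \<in> {2..t}" "t + 1 - (j - 1) \<noteq> 1" "t + 1 - (j - 1) - 1 = t + 1 - j"
        using 2 by auto
      have "vecmat t (vecmat t (Xf t T) (Ubar t)) (Tbar t) j = vecmat t (Xf t T) (Ubar t) (j - 1)"
        using 2 by (simp add: vT)
      also have "\<dots> = Xf t T (t + 1 - (j - 1))"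
        using 2 by (intro vU) auto
      also have "\<dots> = (T (t + 1 - (j - 1)) - T (t + 1 - j)) / 2"
        using a by (simp add: Xf_def)
      finally have Y: "vecmat t (vecmat t (Xf t T) (Ubar t)) (Tbar t) j = (T (t + 1 - (j - 1)) - T (t + 1 - j)) / 2" .
      have r2: "ro t T (j-1) = - T (t + 1 - (j - 1))" using 2 by (intro r) auto
      have "Xf t (ro t T) j = (ro t T j - ro t T (j-1)) / 2" using 2 by (simp add: Xf_def)
      then show ?thesis unfolding Y using 2 r[of j] r2 by (simp add: stdvec_def)
    next
      case 3 then show ?thesis using rv assms by (auto simp: Xf_def vT stdvec_def)
    qed
  qed
qed

theorem corollary2p3:
  fixes t :: nat and T :: "nat \<Rightarrow> real"
  assumes "t \<ge> 3" and "T \<in> signvecs t"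
  shows "qnum t (ro t T) = qnum t T
    \<and> (card (negset t T \<inter> {1, t}) = 1 \<longrightarrow>
         xvec t (ro t T) = vecmat t (vecmat t (xvec t T) (Ubar t)) (Tbar t))
    \<and> (card (negset t T \<inter> {1, t}) = 2 \<longrightarrow>
         xvec t (ro t T) = (\<lambda>i. stdvec 1 i + vecmat t (vecmat t (xvec t T) (Ubar t)) (Tbar t) i))
    \<and> (card (negset t T \<inter> {1, t}) = 0 \<longrightarrow>
         xvec t (ro t T) = (\<lambda>i. - stdvec 1 i + vecmat t (vecmat t (xvec t T) (Ubar t)) (Tbar t) i))"
proof -
  have Tv: "T \<in> vecs t" using assms(2) by (simp add: signvecs_def)
  have t2: "t \<ge> 2" "t \<ge> 1" using assms(1) by auto
  have T1: "T 1 = 1 \<or> T 1 = -1" and Tt: "T t = 1 \<or> T t = -1"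
    using assms by (auto simp: signvecs_def)
  define X where "X = xvec t T"
  define Y where "Y = vecmat t (vecmat t X (Ubar t)) (Tbar t)"
  define c where "c = - (T 1 + T t) / 2"
  have K: "xvec t (ro t T) = (\<lambda>i. c * stdvec 1 i + Y i)"
    using key[OF Tv t2(1)] by (simp add: X_def Y_def c_def)
  have X1: "X 1 = (T 1 + T t) / 2" using xvec_eq[OF Tv t2(2)] t2 by (simp add: X_def Xf_def)
  have Xr: "xvec t (ro t T) i = (if i = 1 then - X 1 else X (t + 2 - i))" if "i \<in> {1..t}" for i
  proof (cases "i = 1")
    case True then show ?thesis using K X1 by (simp add: Y_def vT stdvec_def c_def)
  next
    case False
    then have "Y i = vecmat t X (Ubar t) (i - 1)" using that by (simp add: Y_def vT)
    also have "\<dots> = X (t + 1 - (i - 1))" using that False by (intro vU) auto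
    finally show ?thesis using K False that by (simp add: stdvec_def)
  qed
  define h where "h i = (if i = (1::nat) then 1 else t + 2 - i)" for i
  have hh: "h (h i) = i" "h i \<in> {1..t}" if "i \<in> {1..t}" for i using that t2 by (auto simp: h_def)
  have A: "{i \<in> {1..t}. xvec t (ro t T) i \<noteq> 0} = h ` {i \<in> {1..t}. X i \<noteq> 0}"
  proof (rule set_eqI, rule iffI)
    fix i assume "i \<in> {i \<in> {1..t}. xvec t (ro t T) i \<noteq> 0}"
    then have i: "i \<in> {1..t}" "xvec t (ro t T) i \<noteq> 0" by auto
    then have "X (h i) \<noteq> 0" using Xr[OF i(1)] by (auto simp: h_def split: if_splits)
    then have "h i \<in> {i \<in> {1..t}. X i \<noteq> 0}" using hh[OF i(1)] by auto
    then show "i \<in> h ` {i \<in> {1..t}. X i \<noteq> 0}" using hh[OF i(1)] by (metis image_eqI)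
  next
    fix i assume "i \<in> h ` {i \<in> {1..t}. X i \<noteq> 0}"
    then obtain k where k: "k \<in> {1..t}" "X k \<noteq> 0" "i = h k" by auto
    have "xvec t (ro t T) (h k) \<noteq> 0" using Xr[OF hh(2)[OF k(1)]] hh(1)[OF k(1)] k
      by (auto simp: h_def split: if_splits)
    then show "i \<in> {i \<in> {1..t}. xvec t (ro t T) i \<noteq> 0}" using k hh(2)[OF k(1)] by auto
  qed
  have inj: "inj_on h {i \<in> {1..t}. X i \<noteq> 0}"
    by (rule inj_onI) (metis (no_types, lifting) hh(1) mem_Collect_eq)
  have q: "qnum t (ro t T) = qnum t T"
    unfolding qnum_def A X_def[symmetric] using card_image[OF inj] by simp
  have N: "negset t T \<inter> {1, t} = (if T 1 = -1 then {1} else {}) \<union> (if T t = -1 then {t} else {})"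
    using t2 by (auto simp: negset_def)
  show ?thesis
    unfolding K X_def[symmetric] Y_def[symmetric]
    using q T1 Tt t2 unfolding N c_def
    by (auto simp: fun_eq_iff)
qed

end
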